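(* For all $n\ge1$ and $k\ge0$, the map sending a word $x_n\cdots x_1\in L_{\mathrm{Rect}}$ to $\psi_{x_n}\circ\cdots\circ\psi_{x_1}(e_0)$ restricts to a bijection from the set of words in $L_{\mathrm{Rect}}$ of length $n$ containing exactly $k$ occurrences of the letter $d$ onto the set of rectangular permutations in $S_n$ with exactly $k$ recoils.
   Context: A permutation is rectangular if it avoids $2413,2431,4213,4231$; a recoil of $\pi\in S_n$ is $i\in\{1,\dots,n-1\}$ with $\pi^{-1}_i>\pi^{-1}_{i+1}$; $e_0$ is the empty permutation. For $\pi\in S_n$ (one-line form) and $1\le i,j\le n+1$, $\rho_{i,j}(\pi)\in S_{n+1}$ is obtained by increasing by $1$ every entry $\ge i$ and inserting the value $i$ at position $j$. Operators: $\psi_1=\rho_{1,1}$, domain all rectangular permutations (including $e_0$); $\psi_2=\rho_{1,2}$, domain rectangular $\pi$ of size $\ge1$ with $\pi_1\ne1$; $\psi_u(\pi)=\rho_{\pi_1,1}(\pi)$, same domain as $\psi_2$; $\psi_d(\pi)=\rho_{\pi_1+1,1}(\pi)$, domain rectangular $\pi$ of size $\ge1$. A word $x_m\cdots x_1$ over $\{1,2,u,d\}$ stands for $\psi_{x_m}\circ\cdots\circ\psi_{x_1}$ (rightmost applied first); $L_{\mathrm{Rect}}$ is the set of words of length $m\ge1$ for which this composition applied to $e_0$ is defined (each operator applied within its domain). *)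

theory Defs
  imports Main
begin

definition perms :: "nat \<Rightarrow> nat list set" where
  "perms n = {p. length p = n \<and> distinct p \<and> set p = {1..n}}"

definition contains_pattern :: "nat list \<Rightarrow> nat list \<Rightarrow> bool" where
  "contains_pattern p s \<longleftrightarrow>
     (\<exists>idx. length idx = length s \<and> sorted_wrt (<) idx \<and> (\<forall>a\<in>set idx. a < length p) \<and>
        (\<forall>a < length s. \<forall>b < length s. (p ! (idx ! a) < p ! (idx ! b)) \<longleftrightarrow> (s ! a < s ! b)))"

definition avoids :: "nat list \<Rightarrow> nat list \<Rightarrow> bool" where
  "avoids p s \<longleftrightarrow> \<not> contains_pattern p s"

definition rectangular :: "nat list \<Rightarrow> bool" where
  "rectangular p \<longleftrightarrow> avoids p [2,4,1,3] \<and> avoids p [2,4,3,1] \<and> avoids p [4,2,1,3] \<and> avoids p [4,2,3,1]"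

definition recoils :: "nat list \<Rightarrow> nat set" where
  "recoils p = {i. 1 \<le> i \<and> i \<le> length p - 1 \<and>
      (\<exists>a b. a < length p \<and> b < length p \<and> p ! a = i \<and> p ! b = i + 1 \<and> a > b)}"

definition rho :: "nat \<Rightarrow> nat \<Rightarrow> nat list \<Rightarrow> nat list" where
  "rho i j p = (let q = map (\<lambda>x. if x \<ge> i then x + 1 else x) p
                in take (j - 1) q @ [i] @ drop (j - 1) q)"

datatype letter = L1 | L2 | Lu | Ld

fun psi :: "letter \<Rightarrow> nat list \<Rightarrow> nat list option" where
  "psi L1 p = (if rectangular p then Some (rho 1 1 p) else None)"
| "psi L2 p = (if rectangular p \<and> length p \<ge> 1 \<and> hd p \<noteq> 1 then Some (rho 1 2 p) else None)"
| "psi Lu p = (if rectangular p \<and> length p \<ge> 1 \<and> hd p \<noteq> 1 then Some (rho (hd p) 1 p) else None)"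
| "psi Ld p = (if rectangular p \<and> length p \<ge> 1 then Some (rho (hd p + 1) 1 p) else None)"

(* A word x_m ... x_1 is the list [x_m, ..., x_1]; x_1 (last element) is applied first to e_0 = [] *)
fun eval_word :: "letter list \<Rightarrow> nat list option" where
  "eval_word [] = Some []"
| "eval_word (x # w) = Option.bind (eval_word w) (psi x)"

definition L_Rect :: "letter list set" where
  "L_Rect = {w. length w \<ge> 1 \<and> eval_word w \<noteq> None}"

end

theory Submission imports Defs begin

definition P4 :: "nat \<Rightarrow> nat \<Rightarrow> nat \<Rightarrow> nat \<Rightarrow> bool" where
 "P4 a b c d \<longleftrightarrow> min c d < min a b \<and> min a b < max c d \<and> max c d < max a b"

definition bad :: "nat list \<Rightarrow> bool" where
 "bad p \<longleftrightarrow> (\<exists>i0 i1 i2 i3. i0<i1 \<and> i1<i2 \<and> i2<i3 \<and> i3<length p \<and> P4 (p!i0) (p!i1) (p!i2) (p!i3))"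

lemma all4: "(\<forall>a<(4::nat). P a) \<longleftrightarrow> P 0 \<and> P 1 \<and> P 2 \<and> P 3"
  by (auto simp: numeral_eq_Suc less_Suc_eq)

lemma cp4: "contains_pattern p [s0,s1,s2,s3] \<longleftrightarrow> (\<exists>i0 i1 i2 i3. i0<i1 \<and> i1<i2 \<and> i2<i3 \<and> i3<length p \<and>
   (\<forall>a<4. \<forall>b<4. (p!([i0,i1,i2,i3]!a) < p!([i0,i1,i2,i3]!b)) \<longleftrightarrow> ([s0,s1,s2,s3]!a < [s0,s1,s2,s3]!b)))"
proof
  assume "contains_pattern p [s0,s1,s2,s3]"
  then obtain idx where h0: "length idx = length [s0,s1,s2,s3]" "sorted_wrt (<) idx" "\<forall>a\<in>set idx. a < length p"
     "\<forall>a<length [s0,s1,s2,s3]. \<forall>b<length [s0,s1,s2,s3]. (p!(idx!a) < p!(idx!b)) \<longleftrightarrow> ([s0,s1,s2,s3]!a < [s0,s1,s2,s3]!b)"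
    unfolding contains_pattern_def by blast
  have h: "length idx = 4" "sorted_wrt (<) idx" "\<forall>a\<in>set idx. a < length p"
     "\<forall>a<4. \<forall>b<4. (p!(idx!a) < p!(idx!b)) \<longleftrightarrow> ([s0,s1,s2,s3]!a < [s0,s1,s2,s3]!b)"
  proof -
    have l: "length [s0,s1,s2,s3] = (4::nat)" by simp
    show "length idx = 4" "sorted_wrt (<) idx" "\<forall>a\<in>set idx. a < length p"
     "\<forall>a<4. \<forall>b<4. (p!(idx!a) < p!(idx!b)) \<longleftrightarrow> ([s0,s1,s2,s3]!a < [s0,s1,s2,s3]!b)"
      using h0 unfolding l by blast+
  qed
  from h(1) obtain i0 i1 i2 i3 where e: "idx = [i0,i1,i2,i3]"
    by (auto simp: length_Suc_conv numeral_eq_Suc)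
  show "\<exists>i0 i1 i2 i3. i0<i1 \<and> i1<i2 \<and> i2<i3 \<and> i3<length p \<and>
   (\<forall>a<4. \<forall>b<4. (p!([i0,i1,i2,i3]!a) < p!([i0,i1,i2,i3]!b)) \<longleftrightarrow> ([s0,s1,s2,s3]!a < [s0,s1,s2,s3]!b))"
    using h unfolding e by auto
next
  assume "\<exists>i0 i1 i2 i3. i0<i1 \<and> i1<i2 \<and> i2<i3 \<and> i3<length p \<and>
   (\<forall>a<4. \<forall>b<4. (p!([i0,i1,i2,i3]!a) < p!([i0,i1,i2,i3]!b)) \<longleftrightarrow> ([s0,s1,s2,s3]!a < [s0,s1,s2,s3]!b))"
  then obtain i0 i1 i2 i3 where "i0<i1 \<and> i1<i2 \<and> i2<i3 \<and> i3<length p \<and>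
   (\<forall>a<4. \<forall>b<4. (p!([i0,i1,i2,i3]!a) < p!([i0,i1,i2,i3]!b)) \<longleftrightarrow> ([s0,s1,s2,s3]!a < [s0,s1,s2,s3]!b))" by blast
  then show "contains_pattern p [s0,s1,s2,s3]" unfolding contains_pattern_def
    by (intro exI[of _ "[i0,i1,i2,i3]"]) auto
qed

lemma P4_iff: "P4 a b c d \<longleftrightarrow> (c<a \<and> a<d \<and> d<b) \<or> (d<a \<and> a<c \<and> c<b) \<or> (c<b \<and> b<d \<and> d<a) \<or> (d<b \<and> b<c \<and> c<a)"
  by (auto simp: P4_def min_def max_def)

lemma blk: "(\<forall>a<4. \<forall>b<4. ([x0,x1,x2,x3::nat]!a < [x0,x1,x2,x3]!b) \<longleftrightarrow> ([s0,s1,s2,s3::nat]!a < [s0,s1,s2,s3]!b))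
  \<longleftrightarrow> ((x0<x1 \<longleftrightarrow> s0<s1) \<and> (x0<x2 \<longleftrightarrow> s0<s2) \<and> (x0<x3 \<longleftrightarrow> s0<s3) \<and>
       (x1<x0 \<longleftrightarrow> s1<s0) \<and> (x1<x2 \<longleftrightarrow> s1<s2) \<and> (x1<x3 \<longleftrightarrow> s1<s3) \<and>
       (x2<x0 \<longleftrightarrow> s2<s0) \<and> (x2<x1 \<longleftrightarrow> s2<s1) \<and> (x2<x3 \<longleftrightarrow> s2<s3) \<and>
       (x3<x0 \<longleftrightarrow> s3<s0) \<and> (x3<x1 \<longleftrightarrow> s3<s1) \<and> (x3<x2 \<longleftrightarrow> s3<s2))"
  unfolding all4 by simp

lemma nthmap4: "p!([i0,i1,i2,i3]!a) = [p!i0,p!i1,p!i2,p!i3]!a" if "a<4"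
  using that by (auto simp: numeral_eq_Suc less_Suc_eq)

lemma cp4': "contains_pattern p [s0,s1,s2,s3] \<longleftrightarrow> (\<exists>i0 i1 i2 i3. i0<i1 \<and> i1<i2 \<and> i2<i3 \<and> i3<length p \<and>
   (\<forall>a<4. \<forall>b<4. ([p!i0,p!i1,p!i2,p!i3]!a < [p!i0,p!i1,p!i2,p!i3]!b) \<longleftrightarrow> ([s0,s1,s2,s3]!a < [s0,s1,s2,s3]!b)))"
  unfolding cp4 by (simp add: nthmap4 cong: conj_cong)

lemma pat1: "(\<forall>a<4. \<forall>b<4. ([x0,x1,x2,x3::nat]!a < [x0,x1,x2,x3]!b) \<longleftrightarrow> ([2,4,1,3::nat]!a < [2,4,1,3]!b)) \<longleftrightarrow> (x2<x0 \<and> x0<x3 \<and> x3<x1)"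
  unfolding blk by auto
lemma pat2: "(\<forall>a<4. \<forall>b<4. ([x0,x1,x2,x3::nat]!a < [x0,x1,x2,x3]!b) \<longleftrightarrow> ([2,4,3,1::nat]!a < [2,4,3,1]!b)) \<longleftrightarrow> (x3<x0 \<and> x0<x2 \<and> x2<x1)"
  unfolding blk by auto
lemma pat3: "(\<forall>a<4. \<forall>b<4. ([x0,x1,x2,x3::nat]!a < [x0,x1,x2,x3]!b) \<longleftrightarrow> ([4,2,1,3::nat]!a < [4,2,1,3]!b)) \<longleftrightarrow> (x2<x1 \<and> x1<x3 \<and> x3<x0)"
  unfolding blk by auto
lemma pat4: "(\<forall>a<4. \<forall>b<4. ([x0,x1,x2,x3::nat]!a < [x0,x1,x2,x3]!b) \<longleftrightarrow> ([4,2,3,1::nat]!a < [4,2,3,1]!b)) \<longleftrightarrow> (x3<x1 \<and> x1<x2 \<and> x2<x0)"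
  unfolding blk by auto

lemma rect_iff: "rectangular p \<longleftrightarrow> \<not> bad p"
  unfolding rectangular_def avoids_def cp4' pat1 pat2 pat3 pat4 bad_def P4_iff
  by (simp only: conj_disj_distribL ex_disj_distrib de_Morgan_disj)


definition sh :: "nat \<Rightarrow> nat \<Rightarrow> nat" where "sh i x = (if i \<le> x then x+1 else x)"
definition ins :: "nat \<Rightarrow> nat \<Rightarrow> nat" where "ins k t = (if t < k then t else Suc t)"

lemma rho_alt: "rho i j p = take (j-1) (map (sh i) p) @ i # drop (j-1) (map (sh i) p)"
  unfolding rho_def sh_def Let_def by simp

lemma rho_len[simp]: "length (rho i j p) = Suc (length p)"
  unfolding rho_alt by simp

lemma rho_nth_j: "j-1 \<le> length p \<Longrightarrow> rho i j p ! (j-1) = i"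
  unfolding rho_alt by (simp add: nth_append)

lemma rho_nth_ins: "j-1 \<le> length p \<Longrightarrow> t < length p \<Longrightarrow> rho i j p ! (ins (j-1) t) = sh i (p!t)"
  unfolding rho_alt ins_def by (auto simp: nth_append min_def nth_Cons' )

lemma sh_inj: "sh i x = sh i y \<longleftrightarrow> x = y"
  unfolding sh_def by auto
lemma sh_mono: "sh i x < sh i y \<longleftrightarrow> x < y"
  unfolding sh_def by auto
lemma sh_ne: "sh i x \<noteq> i"
  unfolding sh_def by auto

lemma perms_alt: "p \<in> perms n \<longleftrightarrow> length p = n \<and> distinct p \<and> set p \<subseteq> {1..n}"
proof
  assume "length p = n \<and> distinct p \<and> set p \<subseteq> {1..n}"
  then have "card (set p) = card {1..n}" "set p \<subseteq> {1..n}" "length p = n" "distinct p"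
    by (auto simp: distinct_card)
  then show "p \<in> perms n" unfolding perms_def using card_subset_eq by blast
qed (auto simp: perms_def)

lemma distinct_mid: "distinct (A @ x # B) \<longleftrightarrow> distinct (x # A @ B)"
  by (auto simp: distinct_append)
lemma distinct_ins_list: "distinct (take k q @ x # drop k q) \<longleftrightarrow> distinct (x # q)"
  unfolding distinct_mid by simp
lemma set_ins_list: "set (take k q @ x # drop k q) = insert x (set q)"
proof -
  have "set (take k q @ x # drop k q) = insert x (set (take k q @ drop k q))" by (simp only: set_append set_simps) blast
  then show ?thesis by simp
qed

lemma rho_perms: "p \<in> perms n \<Longrightarrow> 1 \<le> i \<Longrightarrow> i \<le> Suc n \<Longrightarrow> rho i j p \<in> perms (Suc n)"
  unfolding perms_alt rho_alt distinct_ins_list set_ins_list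
  by (auto simp: distinct_map inj_on_def sh_inj sh_ne) (auto simp: sh_def split: if_splits)

lemma rho_perms_rev: "rho i j p \<in> perms (Suc n) \<Longrightarrow> length p = n \<Longrightarrow> p \<in> perms n"
proof -
  assume a: "rho i j p \<in> perms (Suc n)" "length p = n"
  then have h: "i \<notin> sh i ` set p" "distinct (map (sh i) p)" "insert i (sh i ` set p) \<subseteq> {1..Suc n}"
    unfolding perms_alt rho_alt distinct_ins_list set_ins_list by auto
  have "distinct p" using h by (simp add: distinct_map)
  moreover have "set p \<subseteq> {1..n}"
  proof
    fix x assume "x \<in> set p"
    then have "sh i x \<in> {1..Suc n}" "i \<in> {1..Suc n}" using h by auto
    then show "x \<in> {1..n}" unfolding sh_def by (auto split: if_splits)
  qed
  ultimately show ?thesis using a(2) unfolding perms_alt by simp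
qed


lemma rho_surj: assumes "\<sigma> \<in> perms m" "1 \<le> j" "j \<le> m"
  shows "\<exists>p. length p = m - 1 \<and> rho (\<sigma>!(j-1)) j p = \<sigma>"
proof -
  define k where "k = j - 1"
  define i where "i = \<sigma>!k"
  define r where "r = take k \<sigma> @ drop (Suc k) \<sigma>"
  define p where "p = map (\<lambda>v. if v > i then v - 1 else v) r"
  have km: "k < m" using assms k_def by auto
  have lm: "length \<sigma> = m" "distinct \<sigma>" using assms(1) unfolding perms_def by auto
  have dec: "\<sigma> = take k \<sigma> @ i # drop (Suc k) \<sigma>" unfolding i_def using km lm
    by (simp add: id_take_nth_drop)
  have "distinct (take k \<sigma> @ i # drop (Suc k) \<sigma>)" using lm dec by simp
  then have ni: "i \<notin> set r" unfolding r_def distinct_mid by simp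
  have mp: "map (sh i) p = r" unfolding p_def map_map
  proof (rule map_idI)
    fix v assume "v \<in> set r" then have "v \<noteq> i" using ni by auto
    then show "(sh i \<circ> (\<lambda>v. if v > i then v - 1 else v)) v = v" unfolding sh_def by auto
  qed
  have lr: "length r = m - 1" unfolding r_def using km lm by simp
  have "rho i j p = take k r @ i # drop k r" unfolding rho_alt mp k_def by simp
  also have "\<dots> = take k \<sigma> @ i # drop (Suc k) \<sigma>" unfolding r_def using km lm by simp
  also have "\<dots> = \<sigma>" using dec by simp
  finally have "rho i j p = \<sigma>" .
  then show ?thesis using lr unfolding i_def k_def by (intro exI[of _ p]) (simp add: p_def)
qed

lemma rho_inj: assumes "rho i j p = rho i j p'" "length p = length p'" "j - 1 \<le> length p"
  shows "p = p'"
proof (rule nth_equalityI)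
  show "length p = length p'" by fact
  fix t assume "t < length p"
  then have "sh i (p!t) = sh i (p'!t)" using rho_nth_ins[of j p t i] rho_nth_ins[of j p' t i] assms by simp
  then show "p!t = p'!t" by (simp add: sh_inj)
qed

lemma rho_nth_other: assumes "j-1 \<le> length p" "t < Suc (length p)" "t \<noteq> j-1"
  shows "rho i j p ! t = sh i (p ! (if t < j-1 then t else t-1))"
proof -
  have "ins (j-1) (if t < j-1 then t else t-1) = t" unfolding ins_def using assms by auto
  moreover have "(if t < j-1 then t else t-1) < length p" using assms by auto
  ultimately show ?thesis using rho_nth_ins[OF assms(1)] by metis
qed

lemma P4_sh: "P4 (sh i a) (sh i b) (sh i c) (sh i d) \<longleftrightarrow> P4 a b c d"
  unfolding P4_iff sh_mono by (rule refl)

lemma bad_rho: assumes "bad p" "j-1 \<le> length p" shows "bad (rho i j p)"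
proof -
  obtain i0 i1 i2 i3 where h: "i0<i1" "i1<i2" "i2<i3" "i3<length p" "P4 (p!i0) (p!i1) (p!i2) (p!i3)"
    using assms(1) unfolding bad_def by blast
  have m: "\<And>x y. x < y \<Longrightarrow> ins (j-1) x < ins (j-1) y" unfolding ins_def by auto
  have "ins (j-1) i3 < length (rho i j p)" unfolding ins_def using h by auto
  moreover have "P4 (rho i j p ! ins (j-1) i0) (rho i j p ! ins (j-1) i1) (rho i j p ! ins (j-1) i2) (rho i j p ! ins (j-1) i3)"
  proof -
    have "\<And>t. t < length p \<Longrightarrow> rho i j p ! ins (j-1) t = sh i (p!t)" using rho_nth_ins[OF assms(2)] by blast
    then show ?thesis using h by (simp add: P4_sh)
  qed
  ultimately show ?thesis unfolding bad_def using m h by blast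
qed

lemma rect_unrho: "rectangular (rho i j p) \<Longrightarrow> j-1 \<le> length p \<Longrightarrow> rectangular p"
  using bad_rho rect_iff by blast

lemma bad_unrho: assumes "j-1 \<le> length p" "i0<i1" "i1<i2" "i2<i3" "i3<length (rho i j p)"
  "j-1 \<notin> {i0,i1,i2,i3}" "P4 (rho i j p!i0) (rho i j p!i1) (rho i j p!i2) (rho i j p!i3)"
  shows "bad p"
proof -
  define d where "d = (\<lambda>t. if t < j-1 then t else t-1)"
  have e: "\<And>t. t \<in> {i0,i1,i2,i3} \<Longrightarrow> rho i j p ! t = sh i (p ! d t)"
    unfolding d_def using assms by (intro rho_nth_other) auto
  have m: "\<And>x y. x < y \<Longrightarrow> x \<noteq> j-1 \<Longrightarrow> y \<noteq> j-1 \<Longrightarrow> d x < d y" unfolding d_def by auto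
  have "d i0 < d i1" "d i1 < d i2" "d i2 < d i3" using m assms by auto
  moreover have "d i3 < length p" using assms unfolding d_def by auto
  moreover have "P4 (p!d i0) (p!d i1) (p!d i2) (p!d i3)" using assms(7) e by (simp add: P4_sh)
  ultimately show ?thesis unfolding bad_def by blast
qed


lemma perm_val: "\<sigma> \<in> perms m \<Longrightarrow> t < m \<Longrightarrow> 1 \<le> \<sigma>!t \<and> \<sigma>!t \<le> m"
  unfolding perms_def using nth_mem by fastforce

lemma perm_nth_inj: "\<sigma> \<in> perms m \<Longrightarrow> a < m \<Longrightarrow> b < m \<Longrightarrow> \<sigma>!a = \<sigma>!b \<longleftrightarrow> a = b"
  unfolding perms_def using nth_eq_iff_index_eq by auto

lemma bad_min: assumes "\<sigma> \<in> perms m" "\<sigma>!q = 1" "q \<le> 1" "i0<i1" "i1<i2" "i2<i3" "i3<m"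
   "P4 (\<sigma>!i0) (\<sigma>!i1) (\<sigma>!i2) (\<sigma>!i3)" shows "q \<notin> {i0,i1,i2,i3}"
proof
  assume q: "q \<in> {i0,i1,i2,i3}"
  have "1 \<le> \<sigma>!i2" "1 \<le> \<sigma>!i3" using perm_val[OF assms(1)] assms by auto
  moreover have "q = i0 \<or> q = i1" using q assms by auto
  ultimately show False using assms(2,8) unfolding P4_def by auto
qed

lemma rect_min: assumes "\<pi> \<in> perms n" "rectangular \<pi>" "j - 1 \<le> 1" "j - 1 \<le> n" "rho 1 j \<pi> \<in> perms (Suc n)"
  shows "rectangular (rho 1 j \<pi>)"
proof (rule ccontr)
  assume "\<not> rectangular (rho 1 j \<pi>)"
  then obtain i0 i1 i2 i3 where h: "i0<i1" "i1<i2" "i2<i3" "i3<length (rho 1 j \<pi>)"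
    "P4 (rho 1 j \<pi>!i0) (rho 1 j \<pi>!i1) (rho 1 j \<pi>!i2) (rho 1 j \<pi>!i3)"
    unfolding rect_iff bad_def by blast
  have ln: "length \<pi> = n" using assms(1) unfolding perms_def by auto
  have "rho 1 j \<pi> ! (j-1) = 1" using rho_nth_j assms ln by auto
  then have "j - 1 \<notin> {i0,i1,i2,i3}" using bad_min[OF assms(5) _ assms(3)] h ln by auto
  then have "bad \<pi>" using bad_unrho[of j \<pi>] h assms ln by auto
  then show False using assms(2) rect_iff by blast
qed

lemma twin_P4: assumes "P4 a b c d" "a' = a + 1 \<or> a = a' + 1" "b \<noteq> a'" "c \<noteq> a'" "d \<noteq> a'"
   "b \<noteq> a" "c \<noteq> a" "d \<noteq> a"
  shows "P4 (a'::nat) b c d"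
  using assms unfolding P4_def min_def max_def by (auto split: if_splits)

lemma twin_adj: assumes "P4 a b c d" "b = a + 1 \<or> a = b + 1" shows False
  using assms unfolding P4_def min_def max_def by (auto split: if_splits)

lemma rect_twin: assumes "\<pi> \<in> perms n" "rectangular \<pi>" "rho i 1 \<pi> \<in> perms (Suc n)"
  "rho i 1 \<pi> ! 1 = rho i 1 \<pi> ! 0 + 1 \<or> rho i 1 \<pi> ! 0 = rho i 1 \<pi> ! 1 + 1"
  shows "rectangular (rho i 1 \<pi>)"
proof (rule ccontr)
  define \<sigma> where "\<sigma> = rho i 1 \<pi>"
  have ln: "length \<pi> = n" using assms(1) unfolding perms_def by auto
  assume "\<not> rectangular (rho i 1 \<pi>)"
  then obtain i0 i1 i2 i3 where h: "i0<i1" "i1<i2" "i2<i3" "i3<Suc n"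
    "P4 (\<sigma>!i0) (\<sigma>!i1) (\<sigma>!i2) (\<sigma>!i3)"
    unfolding rect_iff bad_def \<sigma>_def using ln by auto
  have sp: "\<sigma> \<in> perms (Suc n)" using assms \<sigma>_def by simp
  have tw: "\<sigma>!1 = \<sigma>!0 + 1 \<or> \<sigma>!0 = \<sigma>!1 + 1" using assms \<sigma>_def by simp
  have "\<exists>k0. 0 < k0 \<and> k0 < i1 \<and> P4 (\<sigma>!k0) (\<sigma>!i1) (\<sigma>!i2) (\<sigma>!i3)"
  proof (cases "i0 = 0")
    case False then show ?thesis using h by blast
  next
    case True
    show ?thesis
    proof (cases "i1 = 1")
      case True
      then show ?thesis using twin_adj[of "\<sigma>!0" "\<sigma>!1"] h tw \<open>i0 = 0\<close> by auto
    next
      case False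
      then have "1 < i1" using h True by auto
      then have ne: "\<sigma>!i1 \<noteq> \<sigma>!1" "\<sigma>!i2 \<noteq> \<sigma>!1" "\<sigma>!i3 \<noteq> \<sigma>!1"
         "\<sigma>!i1 \<noteq> \<sigma>!0" "\<sigma>!i2 \<noteq> \<sigma>!0" "\<sigma>!i3 \<noteq> \<sigma>!0"
        using perm_nth_inj[OF sp] h by auto
      have "P4 (\<sigma>!1) (\<sigma>!i1) (\<sigma>!i2) (\<sigma>!i3)"
        using twin_P4[of "\<sigma>!0" "\<sigma>!i1" "\<sigma>!i2" "\<sigma>!i3" "\<sigma>!1"] h True tw ne by auto
      then show ?thesis using \<open>1 < i1\<close> by blast
    qed
  qed
  then obtain k0 where k: "0 < k0" "k0 < i1" "P4 (\<sigma>!k0) (\<sigma>!i1) (\<sigma>!i2) (\<sigma>!i3)" by blast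
  have "bad \<pi>" using bad_unrho[of 1 \<pi> k0 i1 i2 i3 i] k h ln unfolding \<sigma>_def by auto
  then show False using assms(2) rect_iff by blast
qed


definition after :: "nat list \<Rightarrow> nat \<Rightarrow> nat \<Rightarrow> bool" where
  "after p x y \<longleftrightarrow> (\<exists>a b. a < length p \<and> b < length p \<and> p!a = x \<and> p!b = y \<and> a > b)"

lemma recoils_alt: "recoils p = {r. 1 \<le> r \<and> r \<le> length p - 1 \<and> after p r (r+1)}"
  unfolding recoils_def after_def by auto

lemma finite_recoils: "finite (recoils p)"
  by (rule finite_subset[of _ "{1..length p}"]) (auto simp: recoils_alt)

lemma after_rho: assumes "j-1 \<le> length p"
  shows "after (rho i j p) (sh i x) (sh i y) \<longleftrightarrow> after p x y"
proof
  assume "after p x y"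
  then obtain a b where h: "a < length p" "b < length p" "p!a = x" "p!b = y" "a > b" unfolding after_def by blast
  have "ins (j-1) a > ins (j-1) b" "ins (j-1) a < length (rho i j p)" "ins (j-1) b < length (rho i j p)"
    unfolding ins_def using h by auto
  moreover have "rho i j p ! ins (j-1) a = sh i x" "rho i j p ! ins (j-1) b = sh i y"
    using rho_nth_ins[OF assms] h by auto
  ultimately show "after (rho i j p) (sh i x) (sh i y)" unfolding after_def by blast
next
  assume "after (rho i j p) (sh i x) (sh i y)"
  then obtain a b where h: "a < Suc (length p)" "b < Suc (length p)" "rho i j p!a = sh i x" "rho i j p!b = sh i y" "a > b"
    unfolding after_def by auto
  have "a \<noteq> j-1" "b \<noteq> j-1" using h rho_nth_j[OF assms] sh_ne by metis+
  define d where "d = (\<lambda>t. if t < j-1 then t else t-1)"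
  have "rho i j p ! a = sh i (p ! d a)" "rho i j p ! b = sh i (p ! d b)"
    unfolding d_def using rho_nth_other[OF assms] h \<open>a \<noteq> j-1\<close> \<open>b \<noteq> j-1\<close> by auto
  then have "p ! d a = x" "p ! d b = y" using h by (auto simp: sh_inj)
  moreover have "d a < length p" "d b < length p" "d a > d b"
    unfolding d_def using h assms \<open>a \<noteq> j-1\<close> \<open>b \<noteq> j-1\<close> by auto
  ultimately show "after p x y" unfolding after_def by blast
qed

lemma rec_rho_set: assumes "p \<in> perms n" "1 \<le> i" "i \<le> Suc n" "j - 1 \<le> n"
  shows "recoils (rho i j p) - {i-1, i} = (\<lambda>r. if r < i-1 then r else r+1) ` (recoils p - {i-1})"
proof -
  have ln: "length p = n" using assms(1) unfolding perms_def by auto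
  have A: "after (rho i j p) (sh i x) (sh i y) \<longleftrightarrow> after p x y" for x y
    using after_rho[of j p i x y] assms ln by auto
  show ?thesis
  proof (rule set_eqI, rule iffI)
    fix s assume s: "s \<in> recoils (rho i j p) - {i-1, i}"
    then have s1: "1 \<le> s" "s \<le> n" "after (rho i j p) s (s+1)" "s \<noteq> i - 1" "s \<noteq> i"
      unfolding recoils_alt using ln by auto
    show "s \<in> (\<lambda>r. if r < i-1 then r else r+1) ` (recoils p - {i-1})"
    proof (cases "s < i - 1")
      case True
      then have "sh i s = s" "sh i (s+1) = s+1" unfolding sh_def by auto
      then have "after p s (s+1)" using A[of s "s+1"] s1 by simp
      then have "s \<in> recoils p - {i-1}" unfolding recoils_alt using s1 True ln assms by auto
      moreover have "s = (\<lambda>r. if r < i-1 then r else r+1) s" using True by simp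
      ultimately show ?thesis by blast
    next
      case False
      then have "s > i" using s1 by auto
      then have "sh i (s-1) = s" "sh i s = s+1" unfolding sh_def by auto
      then have "after p (s-1) s" using A[of "s-1" s] s1 by simp
      then have "s - 1 \<in> recoils p - {i-1}" unfolding recoils_alt using s1 \<open>s > i\<close> ln assms by auto
      moreover have "s = (\<lambda>r. if r < i-1 then r else r+1) (s-1)" using \<open>s > i\<close> by auto
      ultimately show ?thesis by blast
    qed
  next
    fix s assume "s \<in> (\<lambda>r. if r < i-1 then r else r+1) ` (recoils p - {i-1})"
    then obtain r where r: "r \<in> recoils p" "r \<noteq> i - 1" "s = (if r < i-1 then r else r+1)" by blast
    then have r1: "1 \<le> r" "r \<le> n - 1" "after p r (r+1)" unfolding recoils_alt using ln by auto
    show "s \<in> recoils (rho i j p) - {i-1, i}"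
    proof (cases "r < i - 1")
      case True
      then have "sh i r = r" "sh i (r+1) = r+1" unfolding sh_def by auto
      then have "after (rho i j p) r (r+1)" using A[of r "r+1"] r1 by simp
      then show ?thesis unfolding recoils_alt using r r1 True ln by auto
    next
      case False
      then have "r \<ge> i" using r by auto
      then have "sh i r = r+1" "sh i (r+1) = r+2" unfolding sh_def by auto
      then have "after (rho i j p) (r+1) (r+2)" using A[of r "r+1"] r1 by simp
      then show ?thesis unfolding recoils_alt using r r1 False \<open>r \<ge> i\<close> ln by auto
    qed
  qed
qed

lemma card_split: "finite A \<Longrightarrow> card A = card (A - B) + card (A \<inter> B)"
proof -
  assume f: "finite A"
  have "A = (A - B) \<union> (A \<inter> B)" by blast
  then have "card A = card ((A - B) \<union> (A \<inter> B))" by simp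
  also have "\<dots> = card (A - B) + card (A \<inter> B)" using f by (intro card_Un_disjoint) auto
  finally show ?thesis .
qed

lemma rec_card: assumes "p \<in> perms n" "1 \<le> i" "i \<le> Suc n" "j - 1 \<le> n"
  shows "card (recoils (rho i j p)) = card (recoils p - {i-1}) + card (recoils (rho i j p) \<inter> {i-1,i})"
proof -
  have inj: "inj (\<lambda>r. if r < i-1 then r else (r+1::nat))" unfolding inj_def by auto
  have "card (recoils (rho i j p) - {i-1, i}) = card (recoils p - {i-1})"
    unfolding rec_rho_set[OF assms] by (rule card_image, rule inj_on_subset[OF inj], simp)
  then show ?thesis using card_split[OF finite_recoils, of "rho i j p" "{i-1,i}"] by simp
qed

lemma not_after0: assumes "p \<in> perms m" "p!0 = v" shows "\<not> after p v w"
proof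
  assume "after p v w"
  then obtain a b where h: "a < length p" "b < length p" "p!a = v" "b < a" unfolding after_def by blast
  have "length p = m" using assms unfolding perms_def by auto
  then have "a = 0" using perm_nth_inj[OF assms(1), of a 0] h assms by auto
  then show False using h by auto
qed

lemma after0: assumes "p \<in> perms m" "0 < m" "p!0 = w" "1 \<le> v" "v \<le> m" "v \<noteq> w" shows "after p v w"
proof -
  have "v \<in> set p" using assms(1,4,5) unfolding perms_def by auto
  then obtain t where t: "t < length p" "p!t = v" by (auto simp: in_set_conv_nth)
  have "t \<noteq> 0"
  proof
    assume "t = 0" then show False using t assms(3,6) by simp
  qed
  then have "t < length p \<and> 0 < length p \<and> p!t = v \<and> p!0 = w \<and> 0 < t" using t assms by auto
  then show ?thesis unfolding after_def by blast
qed


lemma rho1_nth: assumes "length p \<ge> 1"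
  shows "rho i 1 p ! 0 = i" "rho i 1 p ! 1 = sh i (p!0)"
proof -
  have e: "ins (1-1) 0 = 1" by (simp add: ins_def)
  show "rho i 1 p ! 0 = i" using rho_nth_j[of 1 p i] by simp
  show "rho i 1 p ! 1 = sh i (p!0)" using rho_nth_ins[of 1 p 0 i] assms unfolding e by (cases p) auto
qed

lemma rho2_nth: assumes "length p \<ge> 1"
  shows "rho i 2 p ! 1 = i" "rho i 2 p ! 0 = sh i (p!0)"
proof -
  have e: "ins (2-1) 0 = 0" by (simp add: ins_def)
  have e2: "(2::nat) - 1 = 1" by simp
  show "rho i 2 p ! 1 = i" using rho_nth_j[of 2 p i] assms unfolding e2 by simp
  show "rho i 2 p ! 0 = sh i (p!0)" using rho_nth_ins[of 2 p 0 i] assms unfolding e by (cases p) auto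
qed

lemma perm_hd: assumes "p \<in> perms n" "n \<ge> 1" shows "hd p = p!0" "1 \<le> p!0" "p!0 \<le> n" "length p = n"
proof -
  show "length p = n" using assms unfolding perms_def by auto
  then have "p \<noteq> []" using assms by auto
  then show "hd p = p!0" by (simp add: hd_conv_nth)
  show "1 \<le> p!0" "p!0 \<le> n" using perm_val[OF assms(1)] assms by auto
qed

lemma rec0: "0 \<notin> recoils p" unfolding recoils_alt by auto

lemma psi_step: assumes "\<pi> \<in> perms n" "psi x \<pi> = Some \<sigma>"
  shows "\<sigma> \<in> perms (Suc n) \<and> rectangular \<sigma> \<and> card (recoils \<sigma>) = card (recoils \<pi>) + (if x = Ld then 1 else 0)"
proof -
  have ln: "length \<pi> = n" using assms(1) unfolding perms_def by auto
  show ?thesis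
  proof (cases x)
    case L1
    then have rect: "rectangular \<pi>" and s: "\<sigma> = rho 1 1 \<pi>" using assms by (auto split: if_splits)
    have sp: "\<sigma> \<in> perms (Suc n)" using rho_perms[OF assms(1)] s by auto
    have "rectangular \<sigma>" using rect_min[OF assms(1) rect, of 1] sp s by auto
    moreover have "\<sigma> ! 0 = 1" using s rho_nth_j[of 1 \<pi> 1] by simp
    then have "recoils \<sigma> \<inter> {1-1, 1} = {}" using rec0 not_after0[OF sp] unfolding recoils_alt by auto
    then have "card (recoils \<sigma>) = card (recoils \<pi>)" using rec_card[OF assms(1), of 1 1] s rec0 by simp
    ultimately show ?thesis using sp L1 by simp
  next
    case L2
    then have rect: "rectangular \<pi>" and s: "\<sigma> = rho 1 2 \<pi>" and n1: "n \<ge> 1" and h1: "hd \<pi> \<noteq> 1"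
      using assms ln by (auto split: if_splits)
    note ph = perm_hd[OF assms(1) n1]
    have sp: "\<sigma> \<in> perms (Suc n)" using rho_perms[OF assms(1)] s by auto
    have "rectangular \<sigma>" using rect_min[OF assms(1) rect, of 2] sp s n1 by auto
    moreover have s1: "\<sigma> ! 1 = 1" "\<sigma> ! 0 = \<pi>!0 + 1" using s rho2_nth[of \<pi> 1] ph n1 by (auto simp: sh_def)
    have "\<not> after \<sigma> 1 (1+1)"
    proof
      assume "after \<sigma> 1 (1+1)"
      then obtain a b where h0: "a < length \<sigma>" "b < length \<sigma>" "\<sigma>!a = 1" "\<sigma>!b = 1+1" "b < a"
        unfolding after_def by blast
      then have h: "a < Suc n" "b < Suc n" "\<sigma>!a = 1" "\<sigma>!b = 2" "b < a" using perm_hd(4)[OF sp] by auto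
      then have "a = 1" using perm_nth_inj[OF sp, of a 1] s1 n1 by auto
      then have "b = 0" using h by auto
      then show False using h s1 h1 ph by auto
    qed
    then have "recoils \<sigma> \<inter> {1-1, 1} = {}" using rec0 unfolding recoils_alt by auto
    then have "card (recoils \<sigma>) = card (recoils \<pi>)" using rec_card[OF assms(1), of 1 2] s rec0 n1 by simp
    ultimately show ?thesis using sp L2 by simp
  next
    case Lu
    then have rect: "rectangular \<pi>" and n1: "n \<ge> 1" and h1: "hd \<pi> \<noteq> 1" and s: "\<sigma> = rho (\<pi>!0) 1 \<pi>"
      using assms ln perm_hd[OF assms(1)] by (auto split: if_splits)
    note ph = perm_hd[OF assms(1) n1]
    define a where "a = \<pi>!0"
    have a2: "a \<ge> 2" "a \<le> n" using ph h1 a_def by auto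
    have sp: "\<sigma> \<in> perms (Suc n)" using rho_perms[OF assms(1)] s ph by auto
    have s1: "\<sigma>!0 = a" "\<sigma>!1 = a + 1" using rho1_nth[of \<pi> a] s ln n1 a_def by (auto simp: sh_def)
    have "rectangular \<sigma>" using rect_twin[OF assms(1) rect, of a] sp s s1 a_def by auto
    moreover
    have "after \<pi> (a-1) a" using after0[OF assms(1)] a2 n1 a_def by auto
    then have aR: "a - 1 \<in> recoils \<pi>" unfolding recoils_alt using a2 ln by auto
    have "after \<sigma> (a-1) a" using after0[OF sp] a2 s1 by auto
    moreover have "\<not> after \<sigma> a (a+1)" using not_after0[OF sp] s1 by auto
    ultimately have "recoils \<sigma> \<inter> {a-1, a} = {a-1}" unfolding recoils_alt using a2 perm_hd(4)[OF sp] by auto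
    then have "card (recoils \<sigma>) = card (recoils \<pi> - {a-1}) + 1" using rec_card[OF assms(1), of a 1] s a2 a_def by simp
    also have "\<dots> = card (recoils \<pi>)" using aR finite_recoils[of \<pi>]
      by (simp add: card_Diff_singleton) (metis card_0_eq empty_iff Suc_pred neq0_conv)
    finally show ?thesis using sp Lu \<open>rectangular \<sigma>\<close> by simp
  next
    case Ld
    then have rect: "rectangular \<pi>" and n1: "n \<ge> 1" and s: "\<sigma> = rho (\<pi>!0 + 1) 1 \<pi>"
      using assms ln perm_hd[OF assms(1)] by (auto split: if_splits)
    note ph = perm_hd[OF assms(1) n1]
    define a where "a = \<pi>!0"
    have a2: "a \<ge> 1" "a \<le> n" using ph a_def by auto
    have sp: "\<sigma> \<in> perms (Suc n)" using rho_perms[OF assms(1)] s ph by auto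
    have s1: "\<sigma>!0 = a + 1" "\<sigma>!1 = a" using rho1_nth[of \<pi> "a+1"] s ln n1 a_def by (auto simp: sh_def)
    have "rectangular \<sigma>" using rect_twin[OF assms(1) rect, of "a+1"] sp s s1 a_def by auto
    moreover
    have "\<not> after \<pi> a (a+1)" using not_after0[OF assms(1)] a_def by auto
    then have aR: "a \<notin> recoils \<pi>" unfolding recoils_alt by auto
    have "after \<sigma> a (a+1)" using after0[OF sp] a2 s1 by auto
    moreover have "\<not> after \<sigma> (a+1) (a+2)" using not_after0[OF sp] s1 by auto
    ultimately have "recoils \<sigma> \<inter> {a, a+1} = {a}" unfolding recoils_alt using a2 perm_hd(4)[OF sp] by auto
    then have "card (recoils \<sigma>) = card (recoils \<pi> - {a}) + 1" using rec_card[OF assms(1), of "a+1" 1] s a2 a_def by simp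
    also have "\<dots> = card (recoils \<pi>) + 1" using aR by simp
    finally show ?thesis using sp Ld \<open>rectangular \<sigma>\<close> by simp
  qed
qed


lemma psi_shape: assumes "\<pi> \<in> perms n" "n \<ge> 1" "psi x \<pi> = Some \<sigma>"
  shows "(x = L1 \<longrightarrow> \<sigma> = rho 1 1 \<pi> \<and> \<sigma>!0 = 1)
       \<and> (x = L2 \<longrightarrow> \<sigma> = rho 1 2 \<pi> \<and> \<sigma>!1 = 1 \<and> \<sigma>!0 = \<pi>!0 + 1 \<and> \<pi>!0 \<ge> 2)
       \<and> (x = Lu \<longrightarrow> \<sigma> = rho (\<pi>!0) 1 \<pi> \<and> \<sigma>!0 = \<pi>!0 \<and> \<sigma>!1 = \<pi>!0 + 1 \<and> \<pi>!0 \<ge> 2)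
       \<and> (x = Ld \<longrightarrow> \<sigma> = rho (\<pi>!0 + 1) 1 \<pi> \<and> \<sigma>!0 = \<pi>!0 + 1 \<and> \<sigma>!1 = \<pi>!0 \<and> \<pi>!0 \<ge> 1)"
proof -
  note ph = perm_hd[OF assms(1,2)]
  have l1: "length \<pi> \<ge> 1" using ph assms by auto
  note r1 = rho1_nth[OF l1] and r2 = rho2_nth[OF l1]
  show ?thesis
  proof (cases x)
    case L1 then show ?thesis using assms r1 by (auto split: if_splits)
  next
    case L2 then show ?thesis using assms r2[of 1] ph by (auto split: if_splits simp: sh_def)
  next
    case Lu then show ?thesis using assms r1[of "\<pi>!0"] ph by (auto split: if_splits simp: sh_def)
  next
    case Ld then show ?thesis using assms r1[of "\<pi>!0+1"] ph by (auto split: if_splits simp: sh_def)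
  qed
qed

lemma psi_vals: assumes "\<pi> \<in> perms n" "n \<ge> 1" "psi x \<pi> = Some \<sigma>"
  shows "(x = L1 \<longrightarrow> \<sigma>!0 = 1)
       \<and> (x = L2 \<longrightarrow> \<sigma>!1 = 1 \<and> \<sigma>!0 \<ge> 3)
       \<and> (x = Lu \<longrightarrow> \<sigma>!0 \<ge> 2 \<and> \<sigma>!1 = \<sigma>!0 + 1)
       \<and> (x = Ld \<longrightarrow> \<sigma>!0 = \<sigma>!1 + 1 \<and> \<sigma>!1 \<ge> 1)"
proof -
  note A = psi_shape[OF assms]
  show ?thesis
  proof (cases x)
    case L1 then show ?thesis using A by blast
  next
    case L2 then have "\<sigma>!1 = 1" "\<sigma>!0 = \<pi>!0 + 1" "\<pi>!0 \<ge> 2" using A by blast+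
    then show ?thesis using L2 by simp
  next
    case Lu then have "\<sigma>!0 = \<pi>!0" "\<sigma>!1 = \<pi>!0 + 1" "\<pi>!0 \<ge> 2" using A by blast+
    then show ?thesis using Lu by simp
  next
    case Ld then have "\<sigma>!0 = \<pi>!0 + 1" "\<sigma>!1 = \<pi>!0" "\<pi>!0 \<ge> 1" using A by blast+
    then show ?thesis using Ld by simp
  qed
qed

lemma perms0: "perms 0 = {[]}" unfolding perms_def by auto

lemma psi_inj: assumes "\<pi> \<in> perms n" "\<pi>' \<in> perms n" "psi x \<pi> = Some \<sigma>" "psi y \<pi>' = Some \<sigma>"
  shows "x = y \<and> \<pi> = \<pi>'"
proof (cases "n = 0")
  case True
  then have "\<pi> = []" "\<pi>' = []" using assms perms0 by auto
  then show ?thesis using assms by (cases x; cases y) (auto split: if_splits)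
next
  case False
  then have n1: "n \<ge> 1" by simp
  note A = psi_shape[OF assms(1) n1 assms(3)] and B = psi_shape[OF assms(2) n1 assms(4)]
  have ln: "length \<pi> = n" "length \<pi>' = n" using assms unfolding perms_def by auto
  have xy: "x = y" using psi_vals[OF assms(1) n1 assms(3)] psi_vals[OF assms(2) n1 assms(4)]
    by (cases x; cases y) auto
  have "\<pi> = \<pi>'"
  proof (cases x)
    case L1
    then have "\<sigma> = rho 1 1 \<pi>" "\<sigma> = rho 1 1 \<pi>'" using A B xy by blast+
    then have "rho 1 1 \<pi> = rho 1 1 \<pi>'" by metis
    then show ?thesis using rho_inj[of 1 1 \<pi> \<pi>'] ln by simp
  next
    case L2
    then have "\<sigma> = rho 1 2 \<pi>" "\<sigma> = rho 1 2 \<pi>'" using A B xy by blast+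
    then have "rho 1 2 \<pi> = rho 1 2 \<pi>'" by metis
    then show ?thesis using rho_inj[of 1 2 \<pi> \<pi>'] ln n1 by simp
  next
    case Lu
    then have "\<sigma> = rho (\<pi>!0) 1 \<pi>" "\<sigma> = rho (\<pi>'!0) 1 \<pi>'" "\<sigma>!0 = \<pi>!0" "\<sigma>!0 = \<pi>'!0"
      using A B xy by blast+
    then have "rho (\<pi>!0) 1 \<pi> = rho (\<pi>!0) 1 \<pi>'" by metis
    then show ?thesis using rho_inj[of "\<pi>!0" 1 \<pi> \<pi>'] ln by simp
  next
    case Ld
    then have "\<sigma> = rho (\<pi>!0+1) 1 \<pi>" "\<sigma> = rho (\<pi>'!0+1) 1 \<pi>'" "\<sigma>!0 = \<pi>!0+1" "\<sigma>!0 = \<pi>'!0+1"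
      using A B xy by blast+
    then have "rho (\<pi>!0+1) 1 \<pi> = rho (\<pi>!0+1) 1 \<pi>'" by (metis add_right_cancel)
    then show ?thesis using rho_inj[of "\<pi>!0+1" 1 \<pi> \<pi>'] ln by simp
  qed
  then show ?thesis using xy by simp
qed

lemma sh_eq_succ: "sh a x = a + 1 \<Longrightarrow> x = a" unfolding sh_def by (auto split: if_splits)
lemma sh_eq_pred: "sh a x = b \<Longrightarrow> a = b + 1 \<Longrightarrow> x = b" unfolding sh_def by (auto split: if_splits)

lemma val_pos: assumes "\<sigma> \<in> perms m" "1 \<le> v" "v \<le> m" obtains q where "q < m" "\<sigma>!q = v"
proof -
  have "v \<in> set \<sigma>" "length \<sigma> = m" using assms unfolding perms_def by auto
  then show ?thesis using that by (auto simp: in_set_conv_nth)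
qed

lemma psi_surj: assumes "\<sigma> \<in> perms (Suc n)" "rectangular \<sigma>"
  shows "\<exists>x \<pi>. \<pi> \<in> perms n \<and> psi x \<pi> = Some \<sigma>"
proof -
  define a where "a = \<sigma>!0"
  have lsig: "length \<sigma> = Suc n" using assms unfolding perms_def by auto
  have get: "\<exists>p. p \<in> perms n \<and> rectangular p \<and> rho (\<sigma>!(j-1)) j p = \<sigma>" if j1: "1 \<le> j" and j2: "j \<le> Suc n" for j
  proof -
    obtain p where p: "length p = n" "rho (\<sigma>!(j-1)) j p = \<sigma>" using rho_surj[OF assms(1) j1 j2] by auto
    then have "p \<in> perms n" using rho_perms_rev assms(1) by metis
    moreover have "rectangular p" using rect_unrho[of "\<sigma>!(j-1)" j p] p assms j1 j2 by auto
    ultimately show ?thesis using p by blast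
  qed
  show ?thesis
  proof (cases "a = 1")
    case True
    obtain p where p: "p \<in> perms n" "rectangular p" "rho (\<sigma>!0) 1 p = \<sigma>" using get[of 1] by auto
    then have "psi L1 p = Some \<sigma>" using True a_def by simp
    then show ?thesis using p by blast
  next
    case False
    have a1: "1 \<le> a" "a \<le> Suc n" using perm_val[OF assms(1), of 0] a_def by auto
    have n1: "n \<ge> 1"
    proof (rule ccontr)
      assume "\<not> n \<ge> 1" then have "n = 0" by simp
      then show False using a1 False by auto
    qed
    define b where "b = \<sigma>!1"
    have b1: "1 \<le> b" "b \<le> Suc n" using perm_val[OF assms(1), of 1] b_def n1 by auto
    have ab: "a \<noteq> b" using perm_nth_inj[OF assms(1), of 0 1] a_def b_def n1 by auto
    show ?thesis
    proof (cases "a = b + 1")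
      case True
      obtain p where p: "p \<in> perms n" "rectangular p" "rho a 1 p = \<sigma>" using get[of 1] a_def by auto
      note ph = perm_hd[OF p(1) n1]
      have "sh a (p!0) = b" using rho1_nth[of p a] p(3) b_def ph n1 by auto
      then have "p!0 = b" using sh_eq_pred True by blast
      then have "psi Ld p = Some \<sigma>" using p ph True n1 by simp
      then show ?thesis using p by blast
    next
      case F2: False
      show ?thesis
      proof (cases "b = a + 1")
        case True
        obtain p where p: "p \<in> perms n" "rectangular p" "rho a 1 p = \<sigma>" using get[of 1] a_def by auto
        note ph = perm_hd[OF p(1) n1]
        have "sh a (p!0) = a + 1" using rho1_nth[of p a] p(3) b_def ph n1 True by auto
        then have "p!0 = a" using sh_eq_succ by blast
        then have "psi Lu p = Some \<sigma>" using p ph False n1 by simp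
        then show ?thesis using p by blast
      next
        case F3: False
        show ?thesis
        proof (cases "b = 1")
          case True
          obtain p where p: "p \<in> perms n" "rectangular p" "rho 1 2 p = \<sigma>" using get[of 2] b_def True n1 by auto
          note ph = perm_hd[OF p(1) n1]
          have "sh 1 (p!0) = a" using rho2_nth[of p 1] p(3) a_def ph n1 by auto
          then have "p!0 + 1 = a" using ph unfolding sh_def by auto
          then have "psi L2 p = Some \<sigma>" using p ph F2 True n1 by auto
          then show ?thesis using p by blast
        next
          case F4: False
          define lo where "lo = min a b"
          define hi where "hi = max a b"
          have lh: "2 \<le> lo" "lo + 1 < hi" "hi \<le> Suc n" using False F2 F3 F4 a1 b1 ab unfolding lo_def hi_def by auto
          obtain q1 where q1: "q1 < Suc n" "\<sigma>!q1 = 1" using val_pos[OF assms(1), of 1] by auto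
          obtain qc where qc: "qc < Suc n" "\<sigma>!qc = lo + 1" using val_pos[OF assms(1), of "lo+1"] lh by auto
          have q1ne: "q1 \<noteq> 0" "q1 \<noteq> 1" using q1(2) a_def b_def False F4 by metis+
          have "lo + 1 \<noteq> a" "lo + 1 \<noteq> b" "lo + 1 \<noteq> 1" using lh unfolding lo_def hi_def by auto
          then have qcne: "qc \<noteq> 0" "qc \<noteq> 1" "qc \<noteq> q1" using qc(2) q1(2) a_def b_def by metis+
          have "bad \<sigma>"
          proof (cases "q1 < qc")
            case True
            have "P4 (\<sigma>!0) (\<sigma>!1) (\<sigma>!q1) (\<sigma>!qc)" using q1 qc lh a_def b_def
              unfolding P4_def lo_def hi_def by auto
            then show ?thesis unfolding bad_def using True q1ne qcne qc lsig
              by (intro exI[of _ 0] exI[of _ 1] exI[of _ q1] exI[of _ qc]) auto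
          next
            case False
            then have "qc < q1" using qcne by auto
            have "P4 (\<sigma>!0) (\<sigma>!1) (\<sigma>!qc) (\<sigma>!q1)" using q1 qc lh a_def b_def
              unfolding P4_def lo_def hi_def by auto
            then show ?thesis unfolding bad_def using \<open>qc < q1\<close> q1ne qcne q1 lsig
              by (intro exI[of _ 0] exI[of _ 1] exI[of _ qc] exI[of _ q1]) auto
          qed
          then show ?thesis using assms(2) rect_iff by blast
        qed
      qed
    qed
  qed
qed


lemma rect_nil: "rectangular []" unfolding rect_iff bad_def by auto

lemma eval_props: "eval_word w = Some p \<Longrightarrow>
   p \<in> perms (length w) \<and> rectangular p \<and> card (recoils p) = count_list w Ld"
proof (induction w arbitrary: p)
  case Nil
  then have "p = []" by simp
  moreover have "recoils [] = {}" unfolding recoils_alt by auto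
  ultimately show ?case using perms0 rect_nil by simp
next
  case (Cons x w)
  then obtain \<pi> where e: "eval_word w = Some \<pi>" "psi x \<pi> = Some p"
    by (cases "eval_word w") auto
  note IH = Cons.IH[OF e(1)]
  show ?case using psi_step[of \<pi> "length w" x p] IH e by auto
qed

lemma eval_inj: "eval_word w = Some p \<Longrightarrow> eval_word w' = Some p \<Longrightarrow> length w = length w' \<Longrightarrow> w = w'"
proof (induction w arbitrary: w' p)
  case Nil then show ?case by simp
next
  case (Cons x w)
  obtain y v where w': "w' = y # v" using Cons.prems(3) by (cases w') auto
  obtain \<pi> where e: "eval_word w = Some \<pi>" "psi x \<pi> = Some p"
    using Cons.prems(1) by (cases "eval_word w") auto
  obtain \<pi>' where e': "eval_word v = Some \<pi>'" "psi y \<pi>' = Some p"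
    using Cons.prems(2) w' by (cases "eval_word v") auto
  have lv: "length v = length w" using Cons.prems(3) w' by simp
  have "\<pi> \<in> perms (length w)" "\<pi>' \<in> perms (length w)" using eval_props[OF e(1)] eval_props[OF e'(1)] lv by auto
  then have "x = y" "\<pi> = \<pi>'" using psi_inj e(2) e'(2) by blast+
  then have "w = v" using Cons.IH[OF e(1)] e'(1) lv by simp
  then show ?case using w' \<open>x = y\<close> by simp
qed

lemma eval_surj: "p \<in> perms n \<Longrightarrow> rectangular p \<Longrightarrow> \<exists>w. length w = n \<and> eval_word w = Some p"
proof (induction n arbitrary: p)
  case 0 then show ?case using perms0 by (intro exI[of _ "[]"]) auto
next
  case (Suc n)
  obtain x \<pi> where h: "\<pi> \<in> perms n" "psi x \<pi> = Some p" using psi_surj Suc.prems by blast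
  have "rectangular \<pi>" using h(2) by (cases x) (auto split: if_splits)
  then obtain w where "length w = n" "eval_word w = Some \<pi>" using Suc.IH h(1) by blast
  then show ?case using h by (intro exI[of _ "x # w"]) simp
qed

theorem corollary4p5:
  fixes n k :: nat
  assumes "n \<ge> 1"
  shows "bij_betw (\<lambda>w. the (eval_word w))
           {w \<in> L_Rect. length w = n \<and> count_list w Ld = k}
           {p \<in> perms n. rectangular p \<and> card (recoils p) = k}"
  unfolding bij_betw_def
proof (intro conjI)
  show "inj_on (\<lambda>w. the (eval_word w)) {w \<in> L_Rect. length w = n \<and> count_list w Ld = k}"
  proof (rule inj_onI)
    fix w w' assume a: "w \<in> {w \<in> L_Rect. length w = n \<and> count_list w Ld = k}"
      "w' \<in> {w \<in> L_Rect. length w = n \<and> count_list w Ld = k}" "the (eval_word w) = the (eval_word w')"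
    then obtain p p' where "eval_word w = Some p" "eval_word w' = Some p'" unfolding L_Rect_def by auto
    then show "w = w'" using eval_inj a by auto
  qed
  show "(\<lambda>w. the (eval_word w)) ` {w \<in> L_Rect. length w = n \<and> count_list w Ld = k}
        = {p \<in> perms n. rectangular p \<and> card (recoils p) = k}"
  proof (rule set_eqI, rule iffI)
    fix p assume "p \<in> (\<lambda>w. the (eval_word w)) ` {w \<in> L_Rect. length w = n \<and> count_list w Ld = k}"
    then obtain w where w: "w \<in> L_Rect" "length w = n" "count_list w Ld = k" "p = the (eval_word w)" by auto
    then have "eval_word w = Some p" unfolding L_Rect_def by auto
    then show "p \<in> {p \<in> perms n. rectangular p \<and> card (recoils p) = k}" using eval_props w by auto
  next
    fix p assume p: "p \<in> {p \<in> perms n. rectangular p \<and> card (recoils p) = k}"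
    then obtain w where w: "length w = n" "eval_word w = Some p" using eval_surj by blast
    then have "count_list w Ld = k" using eval_props p by auto
    moreover have "w \<in> L_Rect" unfolding L_Rect_def using w assms by auto
    ultimately show "p \<in> (\<lambda>w. the (eval_word w)) ` {w \<in> L_Rect. length w = n \<and> count_list w Ld = k}"
      using w by (intro image_eqI[of _ _ w]) auto
  qed
qed

end
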